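(* Let $U_q(H_1,H_2,X^\pm)$ be the Hopf algebra described in the context, and put $E=K_2X^+$, $F=K_2^{-1}X^-$. Then $U_q(H_1,H_2,X^\pm)$ is quasitriangular with universal $R$-matrix $$\mathcal{R}=e^{-i\frac{\pi}{4}H_2\otimes H_2}\,q^{\frac14\left(H_1\otimes H_1-H_2\otimes H_2\right)}\left(1\otimes 1+(1-q^2)\,E\otimes F\right),$$ i.e. $\mathcal R$ is invertible, $\tau\circ\Delta(a)=\mathcal R\,\Delta(a)\,\mathcal R^{-1}$ for all $a$ (with $\tau$ the flip), $(\Delta\otimes\mathrm{id})\mathcal R=\mathcal R_{13}\mathcal R_{23}$ and $(\mathrm{id}\otimes\Delta)\mathcal R=\mathcal R_{13}\mathcal R_{12}$.
   Context: $q$ is a deformation parameter and exponentials of the generators are understood formally (e.g. as formal power series). Set $K_1=q^{H_1/2}$ and $K_2=e^{i\frac{\pi}{2}H_2}q^{H_2/2}$. $U_q(H_1,H_2,X^\pm)$ is the Hopf algebra generated by $H_1,H_2,X^+,X^-$ with relations $[H_1,H_2]=0$, $[H_1,X^\pm]=\pm2X^\pm$, $[H_2,X^\pm]=\mp 2X^\pm$, $[X^+,X^-]=\frac{K_1K_2-K_1^{-1}K_2^{-1}}{q-q^{-1}}$, $(X^\pm)^2=0$; coproduct $\Delta H_i=H_i\otimes1+1\otimes H_i$, $\Delta X^+=X^+\otimes K_1+K_2^{-1}\otimes X^+$, $\Delta X^-=X^-\otimes K_2+K_1^{-1}\otimes X^-$ (so $\Delta K_i=K_i\otimes K_i$); counit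 $\varepsilon(H_i)=\varepsilon(X^\pm)=0$; antipode $S(H_i)=-H_i$, $S(X^+)=-qK_1^{-1}K_2X^+$, $S(X^-)=qK_1K_2^{-1}X^-$. For $\mathcal R=\sum_i a_i\otimes b_i$, $\mathcal R_{12}=\sum a_i\otimes b_i\otimes1$, $\mathcal R_{13}=\sum a_i\otimes 1\otimes b_i$, $\mathcal R_{23}=\sum 1\otimes a_i\otimes b_i$. *)

theory Defs
  imports Complex_Main
begin

text \<open>
The deformation parameter is q = exp hb (hb a complex number, so that
q^z := exp (hb * z) makes sense for complex z).

An element of the completed n-fold tensor power is written in the normal form
  sum over monomial tuples ms = (m_1,...,m_n) of  f_ms(H^(1),...,H^(n)) (m_1 (x) ... (x) m_n),
where m_i ranges over the PBW monomials 1, X+, X-, X+X- (a basis over the Cartan part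
since (X+-)^2 = 0), and f_ms is an arbitrary complex function of the Cartan
eigenvalues H^(i) = (H1,H2) of the i-th tensor factor (Cartan part written on the left).
Such an element is represented by its coefficient function
  F :: mon list => (complex*complex) list => complex,  F ms h = f_ms(h),
vanishing on arguments whose length differs from n.
\<close>

datatype mon = m0 | mP | mM | mPM   \<comment> \<open>1, X+, X-, X+X-\<close>

type_synonym cw = "complex \<times> complex"
type_synonym tens = "mon list \<Rightarrow> cw list \<Rightarrow> complex"

definition mons :: "nat \<Rightarrow> mon list set" where
  "mons n = set (List.n_lists n [m0, mP, mM, mPM])"

definition padd :: "cw \<Rightarrow> cw \<Rightarrow> cw" where
  "padd a b = (fst a + fst b, snd a + snd b)"

definition psub :: "cw \<Rightarrow> cw \<Rightarrow> cw" where
  "psub a b = (fst a - fst b, snd a - snd b)"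

text \<open>weight of a monomial: [H1,X+-] = +-2 X+-, [H2,X+-] = -+2 X+-\<close>
fun wt :: "mon \<Rightarrow> cw" where
  "wt m0 = (0, 0)"
| "wt mP = (2, -2)"
| "wt mM = (-2, 2)"
| "wt mPM = (0, 0)"

text \<open>K1 = q^(H1/2), K2 = e^(i pi H2/2) q^(H2/2), evaluated at eigenvalues h = (h1,h2)\<close>
definition K1 :: "complex \<Rightarrow> cw \<Rightarrow> complex" where
  "K1 hb h = exp (hb * fst h / 2)"

definition K2 :: "complex \<Rightarrow> cw \<Rightarrow> complex" where
  "K2 hb h = exp (\<i> * of_real pi * snd h / 2) * exp (hb * snd h / 2)"

text \<open>[X+,X-] = (K1K2 - K1^-1 K2^-1)/(q - q^-1)\<close>
definition cX :: "complex \<Rightarrow> cw \<Rightarrow> complex" where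
  "cX hb h = (K1 hb h * K2 hb h - inverse (K1 hb h * K2 hb h)) / (exp hb - inverse (exp hb))"

text \<open>Product of two monomials in one tensor factor, as a list of
  (monomial, Cartan coefficient standing on its left).  Uses X- X+ = X+ X- - [X+,X-],
  (X+-)^2 = 0 and g(H) X+- = X+- g(H +- alpha).\<close>
fun mprod :: "complex \<Rightarrow> mon \<Rightarrow> mon \<Rightarrow> (mon \<times> (cw \<Rightarrow> complex)) list" where
  "mprod hb m0 m = [(m, \<lambda>h. 1)]"
| "mprod hb mP m0 = [(mP, \<lambda>h. 1)]"
| "mprod hb mP mP = []"
| "mprod hb mP mM = [(mPM, \<lambda>h. 1)]"
| "mprod hb mP mPM = []"
| "mprod hb mM m0 = [(mM, \<lambda>h. 1)]"
| "mprod hb mM mP = [(mPM, \<lambda>h. 1), (m0, \<lambda>h. - cX hb h)]"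
| "mprod hb mM mM = []"
| "mprod hb mM mPM = [(mM, \<lambda>h. - cX hb h)]"
| "mprod hb mPM m0 = [(mPM, \<lambda>h. 1)]"
| "mprod hb mPM mP = [(mP, \<lambda>h. - cX hb (psub h (wt mP)))]"
| "mprod hb mPM mM = []"
| "mprod hb mPM mPM = [(mPM, \<lambda>h. - cX hb (psub h (wt mP)))]"

definition sc :: "complex \<Rightarrow> mon \<Rightarrow> mon \<Rightarrow> mon \<Rightarrow> cw \<Rightarrow> complex" where
  "sc hb m m' m'' h = sum_list (map (\<lambda>(x, \<phi>). if x = m'' then \<phi> h else 0) (mprod hb m m'))"

definition restr :: "nat \<Rightarrow> tens \<Rightarrow> tens" where
  "restr n F = (\<lambda>ms h. if length ms = n \<and> length h = n then F ms h else 0)"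

definition Tens :: "nat \<Rightarrow> tens set" where
  "Tens n = {F. restr n F = F}"

definition tadd :: "tens \<Rightarrow> tens \<Rightarrow> tens" where
  "tadd F G = (\<lambda>ms h. F ms h + G ms h)"

definition tscale :: "complex \<Rightarrow> tens \<Rightarrow> tens" where
  "tscale c F = (\<lambda>ms h. c * F ms h)"

text \<open>product: (f_a(H) a)(g_b(H) b) = f_a(H) g_b(H - wt a) (a b)\<close>
definition tmul :: "complex \<Rightarrow> nat \<Rightarrow> tens \<Rightarrow> tens \<Rightarrow> tens" where
  "tmul hb n F G = restr n (\<lambda>ms h.
     \<Sum>a\<in>mons n. \<Sum>b\<in>mons n.
       F a h * G b (map2 (\<lambda>hi ai. psub hi (wt ai)) h a) *
       (\<Prod>i<n. sc hb (a ! i) (b ! i) (ms ! i) (h ! i)))"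

definition tone :: "nat \<Rightarrow> tens" where
  "tone n = restr n (\<lambda>ms h. if ms = replicate n m0 then 1 else 0)"

definition cart :: "nat \<Rightarrow> (cw list \<Rightarrow> complex) \<Rightarrow> tens" where
  "cart n \<phi> = restr n (\<lambda>ms h. if ms = replicate n m0 then \<phi> h else 0)"

definition mono :: "nat \<Rightarrow> mon list \<Rightarrow> tens" where
  "mono n xs = restr n (\<lambda>ms h. if ms = xs then 1 else 0)"

definition ttensor :: "nat \<Rightarrow> nat \<Rightarrow> tens \<Rightarrow> tens \<Rightarrow> tens" where
  "ttensor k l F G = restr (k + l)
     (\<lambda>ms h. F (take k ms) (take k h) * G (drop k ms) (drop k h))"

definition tflip :: "tens \<Rightarrow> tens" where
  "tflip F = restr 2 (\<lambda>ms h. F [ms ! 1, ms ! 0] [h ! 1, h ! 0])"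

definition leg12 :: "tens \<Rightarrow> tens" where
  "leg12 F = ttensor 2 1 F (tone 1)"

definition leg23 :: "tens \<Rightarrow> tens" where
  "leg23 F = ttensor 1 2 (tone 1) F"

definition leg13 :: "tens \<Rightarrow> tens" where
  "leg13 F = restr 3 (\<lambda>ms h. if ms ! 1 = m0 then F [ms ! 0, ms ! 2] [h ! 0, h ! 2] else 0)"

text \<open>coproduct of the monomials:
  Delta X+ = X+ (x) K1 + K2^-1 (x) X+,  Delta X- = X- (x) K2 + K1^-1 (x) X-,
  Delta (X+X-) = Delta X+ Delta X-\<close>
definition DP :: "complex \<Rightarrow> tens" where
  "DP hb = tadd (tmul hb 2 (cart 2 (\<lambda>h. K1 hb (h ! 1))) (mono 2 [mP, m0]))
                (tmul hb 2 (cart 2 (\<lambda>h. inverse (K2 hb (h ! 0)))) (mono 2 [m0, mP]))"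

definition DM :: "complex \<Rightarrow> tens" where
  "DM hb = tadd (tmul hb 2 (cart 2 (\<lambda>h. K2 hb (h ! 1))) (mono 2 [mM, m0]))
                (tmul hb 2 (cart 2 (\<lambda>h. inverse (K1 hb (h ! 0)))) (mono 2 [m0, mM]))"

fun Dmon :: "complex \<Rightarrow> mon \<Rightarrow> tens" where
  "Dmon hb m0 = tone 2"
| "Dmon hb mP = DP hb"
| "Dmon hb mM = DM hb"
| "Dmon hb mPM = tmul hb 2 (DP hb) (DM hb)"

text \<open>Apply Delta to the k-th tensor factor (0-based) of an n-tensor:
  Delta(f(H) m) = f(H (x) 1 + 1 (x) H) Delta(m).\<close>
definition Dat :: "complex \<Rightarrow> nat \<Rightarrow> nat \<Rightarrow> tens \<Rightarrow> tens" where
  "Dat hb n k F = restr (n + 1) (\<lambda>ms h.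
     \<Sum>m\<in>{m0, mP, mM, mPM}.
       F (take k ms @ m # drop (k + 2) ms) (take k h @ padd (h ! k) (h ! (k + 1)) # drop (k + 2) h) *
       Dmon hb m [ms ! k, ms ! (k + 1)] [h ! k, h ! (k + 1)])"

definition Delta :: "complex \<Rightarrow> tens \<Rightarrow> tens" where
  "Delta hb F = Dat hb 1 0 F"

definition Egen :: "complex \<Rightarrow> tens" where
  "Egen hb = tmul hb 1 (cart 1 (\<lambda>h. K2 hb (h ! 0))) (mono 1 [mP])"

definition Fgen :: "complex \<Rightarrow> tens" where
  "Fgen hb = tmul hb 1 (cart 1 (\<lambda>h. inverse (K2 hb (h ! 0)))) (mono 1 [mM])"

definition Rmat :: "complex \<Rightarrow> tens" where
  "Rmat hb = tmul hb 2
     (tmul hb 2 (cart 2 (\<lambda>h. exp (- \<i> * of_real pi / 4 * (snd (h ! 0) * snd (h ! 1)))))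
                (cart 2 (\<lambda>h. exp (hb * ((fst (h ! 0) * fst (h ! 1) - snd (h ! 0) * snd (h ! 1)) / 4)))))
     (tadd (tone 2) (tscale (1 - exp hb ^ 2) (ttensor 1 1 (Egen hb) (Fgen hb))))"

end

theory Submission
  imports Defs
begin


definition sing :: "nat \<Rightarrow> mon list \<Rightarrow> (cw list \<Rightarrow> complex) \<Rightarrow> tens" where
  "sing n xs f = restr n (\<lambda>ms h. if ms = xs then f h else 0)"

abbreviation shft :: "cw list \<Rightarrow> mon list \<Rightarrow> cw list" where
  "shft h a \<equiv> map2 (\<lambda>hi ai. psub hi (wt ai)) h a"

lemma UNIV_mon: "(UNIV :: mon set) = {m0, mP, mM, mPM}"
  using mon.exhaust by auto

lemma mons_iff[simp]: "xs \<in> mons n \<longleftrightarrow> length xs = n"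
  unfolding mons_def by (auto simp: set_n_lists intro: mon.exhaust)

lemma finite_mons[simp]: "finite (mons n)"
  unfolding mons_def by simp

lemma restr_restr[simp]: "restr n (restr n F) = restr n F"
  unfolding restr_def by (simp add: fun_eq_iff)

lemma tmul_sing_left:
  assumes "length xs = n"
  shows "tmul hb n (sing n xs f) G = restr n (\<lambda>ms h. f h *
     (\<Sum>b\<in>mons n. G b (shft h xs) * (\<Prod>i<n. sc hb (xs ! i) (b ! i) (ms ! i) (h ! i))))"
proof -
  have "(\<Sum>a\<in>mons n. \<Sum>b\<in>mons n. sing n xs f a h * G b (shft h a) *
       (\<Prod>i<n. sc hb (a ! i) (b ! i) (ms ! i) (h ! i))) =
     f h * (\<Sum>b\<in>mons n. G b (shft h xs) * (\<Prod>i<n. sc hb (xs ! i) (b ! i) (ms ! i) (h ! i)))"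
    if "length h = n" for ms h
  proof -
    have "(\<Sum>a\<in>mons n. \<Sum>b\<in>mons n. sing n xs f a h * G b (shft h a) *
       (\<Prod>i<n. sc hb (a ! i) (b ! i) (ms ! i) (h ! i))) =
       (\<Sum>a\<in>mons n. if a = xs then (\<Sum>b\<in>mons n. f h * G b (shft h a) *
       (\<Prod>i<n. sc hb (a ! i) (b ! i) (ms ! i) (h ! i))) else 0)"
      by (rule sum.cong) (auto simp: sing_def restr_def that)
    also have "\<dots> = (\<Sum>b\<in>mons n. f h * G b (shft h xs) *
       (\<Prod>i<n. sc hb (xs ! i) (b ! i) (ms ! i) (h ! i)))"
      using assms by (simp add: sum.delta')
    finally show ?thesis by (simp add: sum_distrib_left mult.assoc)
  qed
  then show ?thesis unfolding tmul_def restr_def by (auto intro!: ext)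
qed

lemma tmul_sing_right:
  assumes "length ys = n"
  shows "tmul hb n F (sing n ys g) = restr n (\<lambda>ms h.
     (\<Sum>a\<in>mons n. F a h * g (shft h a) * (\<Prod>i<n. sc hb (a ! i) (ys ! i) (ms ! i) (h ! i))))"
proof -
  have "(\<Sum>a\<in>mons n. \<Sum>b\<in>mons n. F a h * sing n ys g b (shft h a) *
       (\<Prod>i<n. sc hb (a ! i) (b ! i) (ms ! i) (h ! i))) =
     (\<Sum>a\<in>mons n. F a h * g (shft h a) * (\<Prod>i<n. sc hb (a ! i) (ys ! i) (ms ! i) (h ! i)))"
    if "length h = n" for ms h
  proof (rule sum.cong[OF refl])
    fix a assume a: "a \<in> mons n"
    have "(\<Sum>b\<in>mons n. F a h * sing n ys g b (shft h a) *
       (\<Prod>i<n. sc hb (a ! i) (b ! i) (ms ! i) (h ! i))) =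
      (\<Sum>b\<in>mons n. if b = ys then F a h * g (shft h a) *
       (\<Prod>i<n. sc hb (a ! i) (b ! i) (ms ! i) (h ! i)) else 0)"
      by (rule sum.cong) (use a that in \<open>auto simp: sing_def restr_def\<close>)
    also have "\<dots> = F a h * g (shft h a) * (\<Prod>i<n. sc hb (a ! i) (ys ! i) (ms ! i) (h ! i))"
      using assms by (simp add: sum.delta')
    finally show "(\<Sum>b\<in>mons n. F a h * sing n ys g b (shft h a) *
       (\<Prod>i<n. sc hb (a ! i) (b ! i) (ms ! i) (h ! i))) = 
       F a h * g (shft h a) * (\<Prod>i<n. sc hb (a ! i) (ys ! i) (ms ! i) (h ! i))" .
  qed
  then show ?thesis unfolding tmul_def restr_def by (auto intro!: ext)
qed

lemma tmul_tadd_left: "tmul hb n (tadd F G) H = tadd (tmul hb n F H) (tmul hb n G H)"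
  unfolding tmul_def tadd_def restr_def
  by (auto intro!: ext simp: sum.distrib distrib_right)

lemma tmul_tadd_right: "tmul hb n F (tadd G H) = tadd (tmul hb n F G) (tmul hb n F H)"
  unfolding tmul_def tadd_def restr_def
  by (auto intro!: ext simp: sum.distrib distrib_right distrib_left)

lemma sum_mon4: "(\<Sum>x\<in>{m0,mP,mM,mPM}. f x) = f m0 + f mP + f mM + f mPM"
  by (simp add: add.assoc)

lemma mons_Suc: "mons (Suc n) = (\<lambda>(x,xs). x # xs) ` (UNIV \<times> mons n)"
  by (auto simp: image_iff length_Suc_conv)

lemma sum_mons_Suc: "(\<Sum>a\<in>mons (Suc n). f a) =
   (\<Sum>a\<in>mons n. f (m0 # a)) + (\<Sum>a\<in>mons n. f (mP # a)) + (\<Sum>a\<in>mons n. f (mM # a)) + (\<Sum>a\<in>mons n. f (mPM # a))"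
proof -
  have "(\<Sum>a\<in>mons (Suc n). f a) = (\<Sum>p\<in>UNIV \<times> mons n. f (fst p # snd p))"
    unfolding mons_Suc by (subst sum.reindex) (auto simp: inj_on_def case_prod_beta)
  also have "\<dots> = (\<Sum>x\<in>UNIV. \<Sum>a\<in>mons n. f (x # a))"
    by (subst sum.cartesian_product) (simp add: case_prod_beta)
  also have "\<dots> = (\<Sum>a\<in>mons n. f (m0 # a)) + (\<Sum>a\<in>mons n. f (mP # a)) + (\<Sum>a\<in>mons n. f (mM # a)) + (\<Sum>a\<in>mons n. f (mPM # a))" unfolding UNIV_mon by (simp add: sum_mon4)
  finally show ?thesis .
qed

lemma mons_0: "mons 0 = {[]}" by (auto simp: mons_def)

lemma restr_eqI: "(\<And>ms h. length ms = n \<Longrightarrow> length h = n \<Longrightarrow> F ms h = G ms h) \<Longrightarrow> restr n F = restr n G"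
  unfolding restr_def by (auto intro!: ext)

lemma len2: "length xs = 2 \<longleftrightarrow> (\<exists>a b. xs = [a, b])"
  by (auto simp: numeral_2_eq_2 length_Suc_conv)
lemma len3: "length xs = 3 \<longleftrightarrow> (\<exists>a b c. xs = [a, b, c])"
  by (auto simp: numeral_3_eq_3 length_Suc_conv)
lemma len1: "length xs = 1 \<longleftrightarrow> (\<exists>a. xs = [a])"
  by (auto simp: length_Suc_conv)

lemma cart_sing: "cart n \<phi> = sing n (replicate n m0) \<phi>" unfolding cart_def sing_def ..
lemma mono_sing: "mono n xs = sing n xs (\<lambda>_. 1)" unfolding mono_def sing_def ..
lemma tone_sing: "tone n = sing n (replicate n m0) (\<lambda>_. 1)" unfolding tone_def sing_def ..


fun combos :: "complex \<Rightarrow> mon list \<Rightarrow> mon list \<Rightarrow> (mon list \<times> (cw list \<Rightarrow> complex)) list" where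
  "combos hb (x # xs) (y # ys) = concat (map (\<lambda>(z, \<phi>). map (\<lambda>(zs, \<psi>). (z # zs, \<lambda>h. \<phi> (hd h) * \<psi> (tl h)))
      (combos hb xs ys)) (mprod hb x y))"
| "combos hb [] [] = [([], \<lambda>h. 1)]"
| "combos hb _ _ = []"

lemma sum_list_map_concat: "sum_list (map F (concat (map G M))) = sum_list (map (\<lambda>p. sum_list (map F (G p))) M)"
  by (induction M) auto

lemma sc_alt: "sc hb m m' m'' h = sum_list (map (\<lambda>(x, \<phi>). if x = m'' then \<phi> h else 0) (mprod hb m m'))"
  unfolding sc_def ..

lemma sum_list_prod: "sum_list (map F A) * sum_list (map G B) = sum_list (map (\<lambda>p. sum_list (map (\<lambda>x. F p * G x) B)) A)" for F :: "_ \<Rightarrow> complex"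
  by (induction A) (simp_all add: distrib_right sum_list_const_mult o_def)

lemma ifmul: "(if P then a else 0) * (if Q then b else 0) = (if P \<and> Q then a * b else (0::complex))"
  by simp

lemma combos_prod:
  "length ys = length xs \<Longrightarrow> length ms = length xs \<Longrightarrow> length h = length xs \<Longrightarrow>
   (\<Prod>i<length xs. sc hb (xs!i) (ys!i) (ms!i) (h!i)) =
   sum_list (map (\<lambda>(zs, \<phi>). if zs = ms then \<phi> h else 0) (combos hb xs ys))"
proof (induction xs arbitrary: ys ms h)
  case Nil then show ?case by simp
next
  case (Cons x xs)
  then obtain y ys' m ms' h0 h' where e: "ys = y # ys'" "ms = m # ms'" "h = h0 # h'"
    by (cases ys; cases ms; cases h) auto
  with Cons.prems have l: "length ys' = length xs" "length ms' = length xs" "length h' = length xs" by auto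
  have "(\<Prod>i<length (x # xs). sc hb ((x # xs)!i) (ys!i) (ms!i) (h!i)) =
     sc hb x y m h0 * (\<Prod>i<length xs. sc hb (xs!i) (ys'!i) (ms'!i) (h'!i))"
    unfolding e by (simp add: prod.lessThan_Suc_shift del: prod.lessThan_Suc)
  also have "\<dots> = sc hb x y m h0 * sum_list (map (\<lambda>(zs, \<phi>). if zs = ms' then \<phi> h' else 0) (combos hb xs ys'))"
    using Cons.IH[OF l] by simp
  also have "\<dots> = sum_list (map (\<lambda>(zs, \<phi>). if zs = ms then \<phi> h else 0) (combos hb (x # xs) ys))"
    unfolding e sc_alt
    by (simp add: sum_list_map_concat sum_list_prod case_prod_beta o_def ifmul cong: if_cong)
  finally show ?case .
qed

definition TL :: "nat \<Rightarrow> (mon list \<times> (cw list \<Rightarrow> complex)) list \<Rightarrow> tens" where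
  "TL n L = restr n (\<lambda>ms h. sum_list (map (\<lambda>(xs, f). if ms = xs then f h else 0) L))"

lemma sl_helper: "(c::complex) * (d * sum_list (map (\<lambda>(zs,\<phi>). if zs = ms then \<phi> h else 0) L)) =
   sum_list (map (\<lambda>x. if ms = fst x then c * d * snd x h else 0) L)"
  by (induction L) (auto simp: distrib_left case_prod_beta mult.assoc)

lemma tmul_sing_sing:
  assumes "length xs = n" "length ys = n"
  shows "tmul hb n (sing n xs f) (sing n ys g) =
    TL n (map (\<lambda>(zs, \<phi>). (zs, \<lambda>h. f h * g (shft h xs) * \<phi> h)) (combos hb xs ys))"
proof -
  have "f h * (\<Sum>b\<in>mons n. sing n ys g b (shft h xs) * (\<Prod>i<n. sc hb (xs ! i) (b ! i) (ms ! i) (h ! i))) =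
     sum_list (map (\<lambda>(xs, f). if ms = xs then f h else 0)
       (map (\<lambda>(zs, \<phi>). (zs, \<lambda>h. f h * g (shft h xs) * \<phi> h)) (combos hb xs ys)))"
    if "length ms = n" "length h = n" for ms h
  proof -
    have "(\<Sum>b\<in>mons n. sing n ys g b (shft h xs) * (\<Prod>i<n. sc hb (xs ! i) (b ! i) (ms ! i) (h ! i))) =
      (\<Sum>b\<in>mons n. if b = ys then g (shft h xs) * (\<Prod>i<n. sc hb (xs ! i) (b ! i) (ms ! i) (h ! i)) else 0)"
      by (rule sum.cong) (use assms that in \<open>auto simp: sing_def restr_def\<close>)
    also have "\<dots> = g (shft h xs) * (\<Prod>i<n. sc hb (xs ! i) (ys ! i) (ms ! i) (h ! i))"
      using assms by (simp add: sum.delta')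
    finally have 1: "(\<Sum>b\<in>mons n. sing n ys g b (shft h xs) * (\<Prod>i<n. sc hb (xs ! i) (b ! i) (ms ! i) (h ! i))) =
        g (shft h xs) * (\<Prod>i<n. sc hb (xs ! i) (ys ! i) (ms ! i) (h ! i))" .
    have 2: "(\<Prod>i<n. sc hb (xs ! i) (ys ! i) (ms ! i) (h ! i)) =
        sum_list (map (\<lambda>(zs, \<phi>). if zs = ms then \<phi> h else 0) (combos hb xs ys))"
      using combos_prod[of ys xs ms h hb] assms that by simp
    show ?thesis unfolding 1 2
      using sl_helper[of "f h" "g (shft h xs)" ms h "combos hb xs ys"]
      by (simp add: o_def case_prod_beta)
  qed
  then show ?thesis
    unfolding tmul_sing_left[OF assms(1)] TL_def by (intro restr_eqI) auto
qed

lemma TL_Nil: "TL n [] = restr n (\<lambda>_ _. 0)" unfolding TL_def by simp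

lemma TL_Cons: "TL n (p # L) = tadd (sing n (fst p) (snd p)) (TL n L)"
  unfolding TL_def sing_def tadd_def restr_def by (auto intro!: ext simp: case_prod_beta)

lemma TL_append: "TL n (L @ L') = tadd (TL n L) (TL n L')"
  unfolding TL_def tadd_def restr_def by (auto intro!: ext)

lemma TL_concat: "TL n (concat LL) = foldr tadd (map (TL n) LL) (restr n (\<lambda>_ _. 0))"
  by (induction LL) (simp_all add: TL_Nil TL_append)

lemma tmul_zero_left: "tmul hb n (restr n (\<lambda>_ _. 0)) G = restr n (\<lambda>_ _. 0)"
  unfolding tmul_def restr_def by (auto intro!: ext)
lemma tmul_zero_right: "tmul hb n F (restr n (\<lambda>_ _. 0)) = restr n (\<lambda>_ _. 0)"
  unfolding tmul_def restr_def by (auto intro!: ext)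

definition mulL :: "complex \<Rightarrow> (mon list \<times> (cw list \<Rightarrow> complex)) list \<Rightarrow> (mon list \<times> (cw list \<Rightarrow> complex)) list
   \<Rightarrow> (mon list \<times> (cw list \<Rightarrow> complex)) list" where
  "mulL hb L1 L2 = concat (map (\<lambda>(xs, f). concat (map (\<lambda>(ys, g).
      map (\<lambda>(zs, \<phi>). (zs, \<lambda>h. f h * g (shft h xs) * \<phi> h)) (combos hb xs ys)) L2)) L1)"

lemma tmul_TL:
  assumes "\<forall>p\<in>set L1. length (fst p) = n" "\<forall>p\<in>set L2. length (fst p) = n"
  shows "tmul hb n (TL n L1) (TL n L2) = TL n (mulL hb L1 L2)"
  using assms(1)
proof (induction L1)
  case Nil then show ?case by (simp add: mulL_def TL_Nil tmul_zero_left)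
next
  case (Cons p L1)
  obtain xs f where p: "p = (xs, f)" by (cases p)
  have "tmul hb n (sing n xs f) (TL n L2) = TL n (mulL hb [(xs, f)] L2)"
    using assms(2)
  proof (induction L2)
    case Nil then show ?case by (simp add: mulL_def TL_Nil tmul_zero_right)
  next
    case (Cons p2 L2)
    obtain ys g where p2: "p2 = (ys, g)" by (cases p2)
    have "tmul hb n (sing n xs f) (TL n (p2 # L2)) =
       tadd (tmul hb n (sing n xs f) (sing n ys g)) (tmul hb n (sing n xs f) (TL n L2))"
      by (simp add: TL_Cons p2 tmul_tadd_right)
    also have "\<dots> = TL n (mulL hb [(xs, f)] (p2 # L2))"
      using Cons Cons.prems(1) \<open>\<forall>p\<in>set (p # L1). length (fst p) = n\<close>
      by (simp add: tmul_sing_sing p2 p mulL_def TL_append)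
    finally show ?case .
  qed
  then show ?case using Cons
    by (simp add: TL_Cons p tmul_tadd_left mulL_def TL_append)
qed

definition cR :: "complex \<Rightarrow> cw list \<Rightarrow> complex" where
  "cR hb h = exp (- \<i> * of_real pi / 4 * (snd (h ! 0) * snd (h ! 1))) *
     exp (hb * ((fst (h ! 0) * fst (h ! 1) - snd (h ! 0) * snd (h ! 1)) / 4))"

definition tq :: "complex \<Rightarrow> complex" where "tq hb = 1 - exp hb ^ 2"

lemmas evs = sum_mons_Suc mons_0 numeral_2_eq_2 numeral_3_eq_3 restr_def sing_def sc_def tadd_def tscale_def
   ttensor_def



lemma cart_TL: "cart n \<phi> = TL n [(replicate n m0, \<phi>)]"
  unfolding cart_def TL_def by simp
lemma mono_TL: "mono n xs = TL n [(xs, \<lambda>_. 1)]"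
  unfolding mono_def TL_def by simp
lemma tone_TL: "tone n = TL n [(replicate n m0, \<lambda>_. 1)]"
  unfolding tone_def TL_def by simp
lemma tadd_TL: "tadd (TL n L) (TL n L') = TL n (L @ L')"
  by (simp add: TL_append)
lemma tscale_TL: "tscale c (TL n L) = TL n (map (\<lambda>(xs, f). (xs, \<lambda>h. c * f h)) L)"
proof -
  have "c * (\<Sum>(xs, f)\<leftarrow>L. if ms = xs then f h else 0) =
        (\<Sum>(xs, f)\<leftarrow>map (\<lambda>(xs, f). (xs, \<lambda>h. c * f h)) L. if ms = xs then f h else 0)" for ms h
    by (induction L) (auto simp: distrib_left)
  then show ?thesis unfolding tscale_def TL_def restr_def by (auto intro!: ext)
qed

lemma append_eq_take_drop: "length xs = k \<Longrightarrow> (ms = xs @ ys) \<longleftrightarrow> (take k ms = xs \<and> drop k ms = ys)"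
  by (metis append_eq_conv_conj)

lemma ttensor_TL:
  assumes "\<forall>p\<in>set L. length (fst p) = k"
  shows "ttensor k l (TL k L) (TL l L') = TL (k + l)
     (concat (map (\<lambda>(xs, f). map (\<lambda>(ys, g). (xs @ ys, \<lambda>h. f (take k h) * g (drop k h))) L') L))"
  unfolding ttensor_def TL_def
proof (rule restr_eqI)
  fix ms :: "mon list" and h :: "cw list"
  assume l: "length ms = k + l" "length h = k + l"
  have "restr k (\<lambda>ms h. \<Sum>(xs, f)\<leftarrow>L. if ms = xs then f h else 0) (take k ms) (take k h) *
        restr l (\<lambda>ms h. \<Sum>(xs, f)\<leftarrow>L'. if ms = xs then f h else 0) (drop k ms) (drop k h) =
        (\<Sum>(xs, f)\<leftarrow>L. if take k ms = xs then f (take k h) else 0) *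
        (\<Sum>(xs, f)\<leftarrow>L'. if drop k ms = xs then f (drop k h) else 0)"
    using l by (simp add: restr_def)
  also have "\<dots> = (\<Sum>p\<leftarrow>L. \<Sum>q\<leftarrow>L'. if take k ms = fst p \<and> drop k ms = fst q
        then snd p (take k h) * snd q (drop k h) else 0)"
    by (simp add: sum_list_prod case_prod_beta ifmul)
  also have "\<dots> = (\<Sum>p\<leftarrow>L. \<Sum>q\<leftarrow>L'. if ms = fst p @ fst q
        then snd p (take k h) * snd q (drop k h) else 0)"
    using assms by (intro arg_cong[where f=sum_list] map_cong refl) (simp add: append_eq_take_drop)
  also have "\<dots> = (\<Sum>(xs, f)\<leftarrow>concat (map (\<lambda>(xs, f). map (\<lambda>(ys, g). (xs @ ys, \<lambda>h. f (take k h) * g (drop k h))) L') L).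
      if ms = xs then f h else 0)"
    by (simp add: sum_list_map_concat case_prod_beta o_def)
  finally show "restr k (\<lambda>ms h. \<Sum>(xs, f)\<leftarrow>L. if ms = xs then f h else 0) (take k ms) (take k h) *
        restr l (\<lambda>ms h. \<Sum>(xs, f)\<leftarrow>L'. if ms = xs then f h else 0) (drop k ms) (drop k h) = \<dots>" .
qed

lemma TL_eqI: "(\<And>ms h. length ms = n \<Longrightarrow> length h = n \<Longrightarrow>
   sum_list (map (\<lambda>(xs, f). if ms = xs then f h else 0) L) = sum_list (map (\<lambda>(xs, f). if ms = xs then f h else 0) L'))
   \<Longrightarrow> TL n L = TL n L'"
  unfolding TL_def by (rule restr_eqI)

lemma psub_zero[simp]: "psub h (0, 0) = h" by (simp add: psub_def)
lemma padd_zero[simp]: "padd h (0, 0) = h" by (simp add: padd_def)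



lemma K1_sub_P[simp]: "K1 hb (psub h (2, -2)) = K1 hb h * inverse (exp hb)"
proof -
  have "K1 hb (psub h (2, -2)) = exp (hb * fst h / 2 + - hb)"
    unfolding K1_def psub_def by (rule arg_cong[where f=exp]) (simp add: algebra_simps diff_divide_distrib)
  also have "\<dots> = K1 hb h * inverse (exp hb)" by (simp only: exp_add exp_minus K1_def)
  finally show ?thesis .
qed
lemma K1_sub_M[simp]: "K1 hb (psub h (-2, 2)) = K1 hb h * exp hb"
proof -
  have "K1 hb (psub h (-2, 2)) = exp (hb * fst h / 2 + hb)"
    unfolding K1_def psub_def by (rule arg_cong[where f=exp]) (simp add: algebra_simps add_divide_distrib)
  also have "\<dots> = K1 hb h * exp hb" by (simp only: exp_add K1_def)
  finally show ?thesis .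
qed
lemma K2_sub_P[simp]: "K2 hb (psub h (2, -2)) = - (K2 hb h * exp hb)"
proof -
  have "K2 hb (psub h (2, -2)) = exp (\<i> * of_real pi * snd h / 2 + \<i> * of_real pi) * exp (hb * snd h / 2 + hb)"
    unfolding K2_def psub_def
    by (intro arg_cong2[where f="(*)"] arg_cong[where f=exp]) (simp_all add: algebra_simps add_divide_distrib)
  also have "\<dots> = - (K2 hb h * exp hb)" by (simp only: exp_add exp_pi_i' K2_def) simp
  finally show ?thesis .
qed
lemma K2_sub_M[simp]: "K2 hb (psub h (-2, 2)) = - (K2 hb h * inverse (exp hb))"
proof -
  have "K2 hb (psub h (-2, 2)) = exp (\<i> * of_real pi * snd h / 2 + - (\<i> * of_real pi)) * exp (hb * snd h / 2 + - hb)"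
    unfolding K2_def psub_def
    by (intro arg_cong2[where f="(*)"] arg_cong[where f=exp]) (simp_all add: algebra_simps diff_divide_distrib)
  also have "\<dots> = - (K2 hb h * inverse (exp hb))" by (simp only: exp_add exp_minus exp_pi_i' K2_def) simp
  finally show ?thesis .
qed
lemma K1_padd[simp]: "K1 hb (padd x y) = K1 hb x * K1 hb y"
  unfolding K1_def padd_def by (simp add: mult_exp_exp algebra_simps add_divide_distrib)
lemma K2_padd[simp]: "K2 hb (padd x y) = K2 hb x * K2 hb y"
  unfolding K2_def padd_def by (simp add: mult_exp_exp algebra_simps add_divide_distrib)
lemma K1_nz[simp]: "K1 hb x \<noteq> 0" unfolding K1_def by simp
lemma K2_nz[simp]: "K2 hb x \<noteq> 0" unfolding K2_def by simp

definition c2 :: "complex \<Rightarrow> cw \<Rightarrow> cw \<Rightarrow> complex" where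
  "c2 hb x y = exp (- \<i> * of_real pi / 4 * (snd x * snd y)) *
     exp (hb * ((fst x * fst y - snd x * snd y) / 4))"
lemma cR_c2[simp]: "cR hb [x, y] = c2 hb x y" unfolding cR_def c2_def by simp
lemma c2_nz[simp]: "c2 hb x y \<noteq> 0" unfolding c2_def by simp

lemma c2_sub_P1[simp]: "c2 hb (psub x (2, -2)) y = c2 hb x y * inverse (K1 hb y * K2 hb y)"
  unfolding c2_def K1_def K2_def psub_def
  by (simp add: exp_minus[symmetric] mult_exp_exp algebra_simps diff_divide_distrib add_divide_distrib)
lemma c2_sub_M1[simp]: "c2 hb (psub x (-2, 2)) y = c2 hb x y * (K1 hb y * K2 hb y)"
  unfolding c2_def K1_def K2_def psub_def
  by (simp add: exp_minus[symmetric] mult_exp_exp algebra_simps diff_divide_distrib add_divide_distrib)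
lemma c2_sub_P2[simp]: "c2 hb x (psub y (2, -2)) = c2 hb x y * inverse (K1 hb x * K2 hb x)"
  unfolding c2_def K1_def K2_def psub_def
  by (simp add: exp_minus[symmetric] mult_exp_exp algebra_simps diff_divide_distrib add_divide_distrib)
lemma c2_sub_M2[simp]: "c2 hb x (psub y (-2, 2)) = c2 hb x y * (K1 hb x * K2 hb x)"
  unfolding c2_def K1_def K2_def psub_def
  by (simp add: exp_minus[symmetric] mult_exp_exp algebra_simps diff_divide_distrib add_divide_distrib)
lemma c2_padd1[simp]: "c2 hb (padd x y) z = c2 hb x z * c2 hb y z"
  unfolding c2_def padd_def
  by (simp add: mult_exp_exp algebra_simps diff_divide_distrib add_divide_distrib)
lemma c2_padd2[simp]: "c2 hb x (padd y z) = c2 hb x y * c2 hb x z"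
  unfolding c2_def padd_def
  by (simp add: mult_exp_exp algebra_simps diff_divide_distrib add_divide_distrib)



lemma restr2_eqI: "(\<And>x y h0 h1. F [x, y] [h0, h1] = G [x, y] [h0, h1]) \<Longrightarrow> restr 2 F = restr 2 G"
  by (rule restr_eqI) (auto simp: len2)
lemma restr3_eqI: "(\<And>x y z h0 h1 h2. F [x, y, z] [h0, h1, h2] = G [x, y, z] [h0, h1, h2]) \<Longrightarrow> restr 3 F = restr 3 G"
  by (rule restr_eqI) (auto simp: len3)

definition RL :: "complex \<Rightarrow> (mon list \<times> (cw list \<Rightarrow> complex)) list" where
  "RL hb = [([m0,m0], cR hb), ([mP,mM], \<lambda>h. cR hb h * (tq hb * (K2 hb (h!0) * inverse (K2 hb (h!1)))))]"

definition RinvL :: "complex \<Rightarrow> (mon list \<times> (cw list \<Rightarrow> complex)) list" where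
  "RinvL hb = [([m0,m0], \<lambda>h. inverse (cR hb h)),
     ([mP,mM], \<lambda>h. - (tq hb * (K2 hb (h!0) * inverse (K2 hb (h!1)))) * inverse (cR hb (shft h [mP,mM])))]"

lemma Rmat_TL: "Rmat hb = TL 2 (RL hb)"
  unfolding Rmat_def Egen_def Fgen_def cart_TL mono_TL tone_TL
  apply (simp add: numeral_2_eq_2 mulL_def tmul_TL tadd_TL tscale_TL ttensor_TL)
  apply (rule TL_eqI)
  apply (clarsimp simp: length_Suc_conv RL_def tq_def power2_eq_square)
  apply (simp add: c2_def)
  done

lemma RRinv: "tmul hb 2 (TL 2 (RL hb)) (TL 2 (RinvL hb)) = tone 2"
  unfolding tone_TL
  apply (simp add: numeral_2_eq_2 mulL_def tmul_TL RL_def RinvL_def)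
  apply (rule TL_eqI)
  apply (clarsimp simp: length_Suc_conv tq_def power2_eq_square)
  done



definition DPL :: "complex \<Rightarrow> (mon list \<times> (cw list \<Rightarrow> complex)) list" where
  "DPL hb = mulL hb [([m0,m0], \<lambda>h. K1 hb (h!1))] [([mP,m0], \<lambda>_. 1)] @
            mulL hb [([m0,m0], \<lambda>h. inverse (K2 hb (h!0)))] [([m0,mP], \<lambda>_. 1)]"
definition DML :: "complex \<Rightarrow> (mon list \<times> (cw list \<Rightarrow> complex)) list" where
  "DML hb = mulL hb [([m0,m0], \<lambda>h. K2 hb (h!1))] [([mM,m0], \<lambda>_. 1)] @
            mulL hb [([m0,m0], \<lambda>h. inverse (K1 hb (h!0)))] [([m0,mM], \<lambda>_. 1)]"

fun DmonL :: "complex \<Rightarrow> mon \<Rightarrow> (mon list \<times> (cw list \<Rightarrow> complex)) list" where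
  "DmonL hb m0 = [([m0,m0], \<lambda>_. 1)]"
| "DmonL hb mP = DPL hb"
| "DmonL hb mM = DML hb"
| "DmonL hb mPM = mulL hb (DPL hb) (DML hb)"

lemma DP_TL: "DP hb = TL 2 (DPL hb)"
  unfolding DP_def DPL_def cart_TL mono_TL
  by (simp add: numeral_2_eq_2 tmul_TL tadd_TL)
lemma DM_TL: "DM hb = TL 2 (DML hb)"
  unfolding DM_def DML_def cart_TL mono_TL
  by (simp add: numeral_2_eq_2 tmul_TL tadd_TL)

lemma Dmon_TL: "Dmon hb m = TL 2 (DmonL hb m)"
  by (cases m) (simp_all add: tone_TL DP_TL DM_TL numeral_2_eq_2, rule tmul_TL,
      simp_all add: DPL_def DML_def mulL_def)


definition DL :: "complex \<Rightarrow> tens \<Rightarrow> (mon list \<times> (cw list \<Rightarrow> complex)) list" where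
  "DL hb a = concat (map (\<lambda>m. map (\<lambda>(ys, g). (ys, \<lambda>h. a [m] [padd (h!0) (h!1)] * g h)) (DmonL hb m)) [m0,mP,mM,mPM])"

lemma Delta_TL: "Delta hb a = TL 2 (DL hb a)"
  unfolding Delta_def Dat_def TL_def one_add_one
  apply (rule restr_eqI)
  apply (clarsimp simp: length_Suc_conv numeral_2_eq_2 sum_mon4 Dmon_TL TL_def restr_def DL_def
     DPL_def DML_def mulL_def)
  done



lemma leg13_R: "leg13 (TL 2 (RL hb)) = TL 3 (map (\<lambda>(xs, f). ([xs!0, m0, xs!1], \<lambda>h. f [h!0, h!2])) (RL hb))"
  unfolding leg13_def TL_def
  apply (rule restr_eqI)
  apply (clarsimp simp: length_Suc_conv numeral_3_eq_3 numeral_2_eq_2 restr_def RL_def)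
  done

lemma coprod1: "Dat hb 2 0 (Rmat hb) = tmul hb 3 (leg13 (Rmat hb)) (leg23 (Rmat hb))"
  unfolding Rmat_TL leg23_def leg13_R
  apply (simp add: tone_TL ttensor_TL RL_def numeral_3_eq_3 numeral_2_eq_2)
  apply (subst tmul_TL)
    apply simp_all
  unfolding Dat_def TL_def
  apply (simp only: numeral_3_eq_3 numeral_2_eq_2 One_nat_def add_Suc_right add_0_right)
  apply (rule restr_eqI)
  apply (clarsimp simp: length_Suc_conv sum_mon4 Dmon_TL TL_def restr_def RL_def
     DPL_def DML_def mulL_def)
  done

lemma coprod2: "Dat hb 2 1 (Rmat hb) = tmul hb 3 (leg13 (Rmat hb)) (leg12 (Rmat hb))"
  unfolding Rmat_TL leg12_def leg13_R
  apply (simp add: tone_TL ttensor_TL RL_def numeral_3_eq_3 numeral_2_eq_2)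
  apply (subst tmul_TL)
    apply simp_all
  unfolding Dat_def TL_def
  apply (simp only: numeral_3_eq_3 numeral_2_eq_2 One_nat_def add_Suc_right add_0_right)
  apply (rule restr_eqI)
  apply (clarsimp simp: length_Suc_conv)
  apply (case_tac y; case_tac ya; case_tac yb)
  apply (simp_all add: sum_mon4 Dmon_TL TL_def restr_def RL_def DPL_def DML_def mulL_def tone_def numeral_2_eq_2 DP_TL DM_TL)
  done


lemma RinvR: "tmul hb 2 (TL 2 (RinvL hb)) (TL 2 (RL hb)) = tone 2"
  unfolding tone_TL
  apply (subst tmul_TL)
    apply (simp_all add: RL_def RinvL_def)
  unfolding TL_def
  apply (rule restr2_eqI)
  apply (simp add: numeral_2_eq_2 mulL_def RL_def RinvL_def)
  apply (case_tac x; case_tac y)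
  apply (simp_all add: tq_def power2_eq_square)
  apply (simp add: field_simps)
  done

lemma padd_commute: "padd x y = padd y x" unfolding padd_def by (simp add: add.commute)
lemma padd_psub_PM[simp]: "padd (psub x (2, -2)) (psub y (-2, 2)) = padd x y"
  unfolding padd_def psub_def by simp
lemma padd_psub_MP[simp]: "padd (psub x (-2, 2)) (psub y (2, -2)) = padd x y"
  unfolding padd_def psub_def by simp
lemma psub_psub_PM[simp]: "psub (psub x (2, -2)) (-2, 2) = x"
  unfolding psub_def by simp
lemma psub_psub_MP[simp]: "psub (psub x (-2, 2)) (2, -2) = x"
  unfolding psub_def by simp

lemma tq_nz: assumes "exp hb ^ 2 \<noteq> 1" shows "tq hb \<noteq> 0"
  using assms unfolding tq_def by simp

lemma cX_alt: assumes "exp hb ^ 2 \<noteq> 1"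
  shows "cX hb h = - (exp hb * (K1 hb h * K2 hb h - inverse (K1 hb h * K2 hb h))) / tq hb"
proof -
  have q: "exp hb - inverse (exp hb) = - tq hb / exp hb"
    unfolding tq_def by (simp add: field_simps power2_eq_square)
  show ?thesis unfolding cX_def q using tq_nz[OF assms] by (simp add: field_simps)
qed

lemma qt: assumes "exp hb ^ 2 \<noteq> 1" shows "tflip (Delta hb a) = tmul hb 2 (tmul hb 2 (Rmat hb) (Delta hb a)) (TL 2 (RinvL hb))"
  unfolding Delta_TL Rmat_TL
  apply (subst tmul_TL)
    apply (simp_all add: RL_def DL_def DPL_def DML_def mulL_def)
  apply (subst tmul_TL)
    apply (simp_all add: RinvL_def)
  unfolding tflip_def TL_def
  apply (rule restr2_eqI)
  apply (case_tac x; case_tac y)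
  apply (simp_all add: restr_def numeral_2_eq_2 RL_def DL_def DPL_def DML_def mulL_def RinvL_def)
  apply (simp_all add: cX_alt[OF assms] padd_commute[of h0 h1])
  apply (simp_all add: field_simps tq_nz[OF assms])
  apply (simp_all add: padd_def add.commute)
  done

theorem mainTheorem1:
  fixes hb :: complex
  assumes "exp hb ^ 2 \<noteq> 1"
  shows "\<exists>Rinv \<in> Tens 2.
           tmul hb 2 (Rmat hb) Rinv = tone 2 \<and> tmul hb 2 Rinv (Rmat hb) = tone 2 \<and>
           (\<forall>a \<in> Tens 1. tflip (Delta hb a) = tmul hb 2 (tmul hb 2 (Rmat hb) (Delta hb a)) Rinv) \<and>
           Dat hb 2 0 (Rmat hb) = tmul hb 3 (leg13 (Rmat hb)) (leg23 (Rmat hb)) \<and>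
           Dat hb 2 1 (Rmat hb) = tmul hb 3 (leg13 (Rmat hb)) (leg12 (Rmat hb))"
proof (rule bexI[of _ "TL 2 (RinvL hb)"])
  show "TL 2 (RinvL hb) \<in> Tens 2" unfolding Tens_def TL_def by simp
  show "tmul hb 2 (Rmat hb) (TL 2 (RinvL hb)) = tone 2 \<and> tmul hb 2 (TL 2 (RinvL hb)) (Rmat hb) = tone 2 \<and>
           (\<forall>a \<in> Tens 1. tflip (Delta hb a) = tmul hb 2 (tmul hb 2 (Rmat hb) (Delta hb a)) (TL 2 (RinvL hb))) \<and>
           Dat hb 2 0 (Rmat hb) = tmul hb 3 (leg13 (Rmat hb)) (leg23 (Rmat hb)) \<and>
           Dat hb 2 1 (Rmat hb) = tmul hb 3 (leg13 (Rmat hb)) (leg12 (Rmat hb))"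
    using RRinv[of hb] RinvR[of hb] qt[OF assms] coprod1[of hb] coprod2[of hb]
    unfolding Rmat_TL by blast
qed

end
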